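(* Let $A,B\in\mathrm{M}_n(\mathbb{C})$ and let $p(x)=\sum_{k=0}^d a_kx^k\in\mathbb{C}[x]$ be a nonconstant polynomial of degree $d$. Then $$\|p(AB)-p(BA)\|_F^2\le n\left(\int_{\|v\|=1}\|(AB-BA)v\|^2\,d\sigma(v)\right)\left(\sum_{k=1}^d |a_k|\,k\,\|A\|_2^{k-1}\|B\|_2^{k-1}\right)^2,$$ where $\sigma$ is the normalized uniform probability measure on the unit sphere of $\mathbb{C}^n$.
   Context: $\|X\|_F=\sqrt{\mathrm{trace}(X^*X)}$ is the Frobenius norm and $\|X\|_2=\sup_{\|v\|=1}\|Xv\|$ is the operator norm of $X\in\mathrm{M}_n(\mathbb{C})$, with $\|\cdot\|$ the Euclidean norm on $\mathbb{C}^n$. *)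

theory Defs
  imports "HOL-Analysis.Analysis" "HOL-Computational_Algebra.Polynomial"
begin

text \<open>Complex n x n matrices are rendered as complex^'n^'n (n = CARD('n)).\<close>

definition conj_transpose :: "complex^'n^'n \<Rightarrow> complex^'n^'n" where
  "conj_transpose X = (\<chi> i j. cnj (X $ j $ i))"

text \<open>Frobenius norm: sqrt(trace(X^* X)) (the trace is real and nonnegative).\<close>
definition frob_norm :: "complex^'n^'n \<Rightarrow> real" where
  "frob_norm X = sqrt (Re (trace (conj_transpose X ** X)))"

definition op_norm :: "complex^'n^'n \<Rightarrow> real" where
  "op_norm X = Sup {norm (X *v v) | v. norm v = 1}"

primrec mat_pow :: "complex^'n^'n \<Rightarrow> nat \<Rightarrow> complex^'n^'n" where
  "mat_pow M 0 = mat 1"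
| "mat_pow M (Suc k) = M ** mat_pow M k"

definition mat_scale :: "complex \<Rightarrow> complex^'n^'n \<Rightarrow> complex^'n^'n" where
  "mat_scale c M = (\<chi> i j. c * M $ i $ j)"

definition poly_mat :: "complex poly \<Rightarrow> complex^'n^'n \<Rightarrow> complex^'n^'n" where
  "poly_mat p M = (\<Sum>k\<le>degree p. mat_scale (coeff p k) (mat_pow M k))"

text \<open>Normalized uniform (rotation-invariant) probability measure on the unit sphere of C^n,
  realised as the image of the normalized Lebesgue measure on the unit ball under v \<mapsto> v/|v|
  (the cone-measure construction of normalized surface measure).\<close>
definition sphere_measure :: "(complex^'n) measure" where
  "sphere_measure = distr (uniform_measure lborel (ball 0 1)) borel sgn"

end

theory Submission
  imports Defs "HOL-Probability.Probability_Measure"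
begin

lemma norm_sq_vec: "(norm (x::complex^'n))^2 = (\<Sum>i\<in>UNIV. (cmod (x$i))^2)"
  by (simp add: norm_vec_def L2_set_def sum_nonneg)

lemma norm_sq_mat: "(norm (X::complex^'n^'m))^2 = (\<Sum>i\<in>UNIV. \<Sum>j\<in>UNIV. (cmod (X$i$j))^2)"
  by (simp add: norm_vec_def L2_set_def sum_nonneg)

lemma frob_eq: "frob_norm X = norm X"
proof -
  have "Re (trace (conj_transpose X ** X)) = (\<Sum>i\<in>UNIV. \<Sum>k\<in>UNIV. (cmod (X$k$i))^2)"
    unfolding trace_def conj_transpose_def matrix_matrix_mult_def
    by (simp add: Re_sum mult.commute[of "cnj _"] flip: complex_norm_square)
  also have "\<dots> = (norm X)^2" unfolding norm_sq_mat by (rule sum.swap)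
  finally show ?thesis unfolding frob_norm_def by simp
qed

lemma norm_transpose: "norm (Finite_Cartesian_Product.transpose X) = norm (X::complex^'n^'n)"
proof -
  have "(norm (Finite_Cartesian_Product.transpose X))^2 = (norm X)^2"
    unfolding norm_sq_mat transpose_def by (simp add: transpose_def) (rule sum.swap)
  then show ?thesis by (simp add: power2_eq_iff_nonneg)
qed

definition bnd :: "complex^'n^'n \<Rightarrow> real \<Rightarrow> bool" where
  "bnd X K \<longleftrightarrow> (\<forall>v. norm (X *v v) \<le> K * norm v)"

lemma mv_scaleR: "(X::complex^'n^'m) *v (c *\<^sub>R v) = c *\<^sub>R (X *v v)"
  by (simp add: vec_eq_iff matrix_vector_mult_def scaleR_sum_right mult_scaleR_right)

lemma row_mult: "(Y ** X) $ i = Finite_Cartesian_Product.transpose X *v (Y $ i)"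
  for X Y :: "complex^'n^'n"
  by (simp add: vec_eq_iff matrix_matrix_mult_def matrix_vector_mult_def transpose_def mult.commute)

lemma right_mult:
  fixes X Y :: "complex^'n^'n"
  assumes "bnd (Finite_Cartesian_Product.transpose X) K" "K \<ge> 0"
  shows "norm (Y ** X) \<le> K * norm Y"
proof -
  have "(norm (Y ** X))^2 = (\<Sum>i\<in>UNIV. (norm ((Y ** X)$i))^2)"
    by (simp add: norm_vec_def L2_set_def sum_nonneg)
  also have "\<dots> \<le> (\<Sum>i\<in>UNIV. (K * norm (Y$i))^2)"
  proof (rule sum_mono)
    fix i
    have "norm ((Y ** X)$i) \<le> K * norm (Y$i)" using assms(1) unfolding bnd_def row_mult by blast
    then show "(norm ((Y ** X)$i))^2 \<le> (K * norm (Y$i))^2" by (simp add: power_mono)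
  qed
  also have "\<dots> = (K * norm Y)^2"
    by (simp add: power_mult_distrib norm_vec_def L2_set_def sum_nonneg sum_distrib_left)
  finally show ?thesis using assms(2)
    by (meson mult_nonneg_nonneg norm_ge_zero power2_le_imp_le)
qed

lemma left_mult:
  fixes X Y :: "complex^'n^'n"
  assumes "bnd X K" "K \<ge> 0"
  shows "norm (X ** Y) \<le> K * norm Y"
proof -
  have "norm (X ** Y) = norm (Finite_Cartesian_Product.transpose Y ** Finite_Cartesian_Product.transpose X)"
    by (metis matrix_transpose_mul norm_transpose)
  also have "\<dots> \<le> K * norm (Finite_Cartesian_Product.transpose Y)"
    by (rule right_mult) (use assms in \<open>simp_all add: transpose_transpose\<close>)
  finally show ?thesis by (simp add: norm_transpose)
qed

lemma bnd_mult: "bnd X K \<Longrightarrow> bnd Y L \<Longrightarrow> K \<ge> 0 \<Longrightarrow> bnd (X ** Y) (K * L)"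
  unfolding bnd_def
  by (metis (no_types, opaque_lifting) matrix_vector_mul_assoc mult.assoc mult_left_mono order_trans)

lemma bnd_one: "bnd (mat 1) 1"
  by (simp add: bnd_def)

lemma bnd_pow: "bnd X K \<Longrightarrow> K \<ge> 0 \<Longrightarrow> bnd (mat_pow X k) (K ^ k)"
  by (induction k) (simp_all add: bnd_one bnd_mult)

lemma bnd_powT: "bnd (Finite_Cartesian_Product.transpose X) K \<Longrightarrow> K \<ge> 0 \<Longrightarrow>
   bnd (Finite_Cartesian_Product.transpose (mat_pow X k)) (K ^ k)"
proof (induction k)
  case 0 then show ?case by (simp add: bnd_one transpose_mat)
next
  case (Suc k)
  then have "bnd (Finite_Cartesian_Product.transpose (mat_pow X k) ** Finite_Cartesian_Product.transpose X) (K^k * K)"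
    by (intro bnd_mult) auto
  then show ?case by (simp add: matrix_transpose_mul mult.commute)
qed

lemma op_bdd: "bdd_above {norm ((X::complex^'n^'n) *v v) | v. norm v = 1}"
proof (rule bdd_aboveI)
  fix r assume "r \<in> {norm (X *v v) | v. norm v = 1}"
  then obtain v where r: "r = norm (X *v v)" and v: "norm v = 1" by blast
  have "norm (X *v v) \<le> (\<Sum>i\<in>UNIV. cmod ((X *v v)$i))"
    unfolding norm_vec_def by (rule L2_set_le_sum) simp
  also have "\<dots> \<le> (\<Sum>i\<in>UNIV. \<Sum>j\<in>UNIV. cmod (X$i$j))"
  proof (rule sum_mono)
    fix i
    have "cmod ((X *v v)$i) \<le> (\<Sum>j\<in>UNIV. cmod (X$i$j * v$j))"
      unfolding matrix_vector_mult_def by (simp add: norm_sum)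
    also have "\<dots> \<le> (\<Sum>j\<in>UNIV. cmod (X$i$j))"
    proof (rule sum_mono)
      fix j
      have "cmod (v$j) \<le> norm v" by (rule Finite_Cartesian_Product.norm_nth_le)
      then have "cmod (v$j) \<le> 1" using v by simp
      then show "cmod (X$i$j * v$j) \<le> cmod (X$i$j)"
        by (simp add: norm_mult mult_left_le)
    qed
    finally show "cmod ((X *v v)$i) \<le> (\<Sum>j\<in>UNIV. cmod (X$i$j))" .
  qed
  finally show "r \<le> (\<Sum>i\<in>UNIV. \<Sum>j\<in>UNIV. cmod (X$i$j))" using r by simp
qed

lemma op_ge: "norm (v::complex^'n) = 1 \<Longrightarrow> norm ((X::complex^'n^'n) *v v) \<le> op_norm X"
  unfolding op_norm_def by (rule cSup_upper) (use op_bdd in auto)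

lemma op_nonneg: "0 \<le> op_norm (X::complex^'n^'n)"
proof -
  have "norm (X *v axis undefined 1) \<le> op_norm X" by (rule op_ge) (simp add: norm_axis_1)
  then show ?thesis using norm_ge_zero order_trans by blast
qed

lemma op_bnd: "bnd (X::complex^'n^'n) (op_norm X)"
  unfolding bnd_def
proof
  fix v :: "complex^'n"
  show "norm (X *v v) \<le> op_norm X * norm v"
  proof (cases "v = 0")
    case True then show ?thesis by simp
  next
    case False
    then have nv: "norm v > 0" by simp
    have "norm (X *v ((1 / norm v) *\<^sub>R v)) \<le> op_norm X"
      by (rule op_ge) (use nv in simp)
    then have "norm (X *v v) / norm v \<le> op_norm X"
      by (simp add: mv_scaleR divide_inverse mult.commute)
    then show ?thesis using nv by (simp add: divide_le_eq mult.commute)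
  qed
qed

lemma op_bndT: "bnd (Finite_Cartesian_Product.transpose (X::complex^'n^'n)) (op_norm X)"
  unfolding bnd_def
proof
  fix v :: "complex^'n"
  define w where "w = Finite_Cartesian_Product.transpose X *v v"
  define u where "u = (\<chi> i. cnj (w$i))"
  have nu: "norm u = norm w"
    using norm_sq_vec[of u] norm_sq_vec[of w] by (simp add: u_def) (metis norm_ge_zero power2_eq_iff_nonneg)
  have key: "complex_of_real ((norm w)^2) = (\<Sum>j\<in>UNIV. v$j * (X *v u)$j)"
  proof -
    have "complex_of_real ((norm w)^2) = (\<Sum>i\<in>UNIV. w$i * cnj (w$i))"
      unfolding norm_sq_vec of_real_sum complex_norm_square by (rule refl)
    also have "\<dots> = (\<Sum>i\<in>UNIV. \<Sum>j\<in>UNIV. X$j$i * v$j * cnj (w$i))"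
      by (simp add: w_def matrix_vector_mult_def transpose_def sum_distrib_right)
    also have "\<dots> = (\<Sum>j\<in>UNIV. \<Sum>i\<in>UNIV. X$j$i * v$j * cnj (w$i))"
      by (rule sum.swap)
    also have "\<dots> = (\<Sum>j\<in>UNIV. v$j * (X *v u)$j)"
      by (simp add: u_def matrix_vector_mult_def sum_distrib_left mult.commute mult.left_commute)
    finally show ?thesis .
  qed
  have "(norm w)^2 = cmod (\<Sum>j\<in>UNIV. v$j * (X *v u)$j)"
    by (metis key norm_of_real abs_of_nonneg zero_le_power2)
  also have "\<dots> \<le> (\<Sum>j\<in>UNIV. cmod (v$j) * cmod ((X *v u)$j))"
    by (metis (no_types, lifting) norm_mult norm_sum sum.cong)
  also have "\<dots> \<le> norm v * norm (X *v u)"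
  proof -
    have "(\<Sum>j\<in>UNIV. cmod (v$j) * cmod ((X *v u)$j))^2 \<le> (norm v * norm (X *v u))^2"
      using Cauchy_Schwarz_ineq_sum[of "\<lambda>j. cmod (v$j)" "\<lambda>j. cmod ((X *v u)$j)" UNIV]
      by (simp add: power_mult_distrib norm_sq_vec)
    then show ?thesis by (meson mult_nonneg_nonneg norm_ge_zero power2_le_imp_le)
  qed
  also have "\<dots> \<le> norm v * (op_norm X * norm w)"
  proof -
    have "norm (X *v u) \<le> op_norm X * norm u" using op_bnd[of X] unfolding bnd_def by blast
    then show ?thesis using nu by (simp add: mult_left_mono)
  qed
  finally have *: "(norm w)^2 \<le> norm v * (op_norm X * norm w)" .
  show "norm (Finite_Cartesian_Product.transpose X *v v) \<le> op_norm X * norm v"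
  proof (cases "norm w = 0")
    case True then show ?thesis using op_nonneg[of X] by (simp add: w_def)
  next
    case False
    then have "norm w > 0" by simp
    with * have "norm w \<le> op_norm X * norm v"
      by (simp add: power2_eq_square mult.commute mult.left_commute)
    then show ?thesis by (simp add: w_def)
  qed
qed

lemma mat_ldistrib: "(X::complex^'n^'n) ** (P - Q) = X ** P - X ** Q"
  by (simp add: vec_eq_iff matrix_matrix_mult_def sum_subtractf right_diff_distrib)

lemma mat_rdistrib: "((X::complex^'n^'n) - Y) ** Q = X ** Q - Y ** Q"
  by (simp add: vec_eq_iff matrix_matrix_mult_def sum_subtractf left_diff_distrib)

lemma pow_diff_bound:
  assumes X: "bnd X K" and Y: "bnd (Finite_Cartesian_Product.transpose Y) K" and K: "K \<ge> 0"
  shows "norm (mat_pow X k - mat_pow Y k) \<le> real k * K^(k-1) * norm (X - Y)"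
proof (induction k)
  case 0 then show ?case by simp
next
  case (Suc k)
  let ?P = "mat_pow X k" and ?Q = "mat_pow Y k"
  have eq: "mat_pow X (Suc k) - mat_pow Y (Suc k) = X ** (?P - ?Q) + (X - Y) ** ?Q"
    by (simp add: mat_ldistrib mat_rdistrib)
  have "norm (mat_pow X (Suc k) - mat_pow Y (Suc k)) \<le> norm (X ** (?P - ?Q)) + norm ((X - Y) ** ?Q)"
    unfolding eq by (rule norm_triangle_ineq)
  also have "\<dots> \<le> K * norm (?P - ?Q) + K^k * norm (X - Y)"
    by (intro add_mono left_mult right_mult bnd_powT X Y K) (simp_all add: K)
  also have "\<dots> \<le> K * (real k * K^(k-1) * norm (X - Y)) + K^k * norm (X - Y)"
    using Suc.IH K by (simp add: mult_left_mono)
  also have "\<dots> = real (Suc k) * K^(Suc k - 1) * norm (X - Y)"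
  proof (cases k)
    case 0 then show ?thesis by simp
  next
    case (Suc m) then show ?thesis by (simp add: algebra_simps)
  qed
  finally show ?case .
qed

lemma mat_scale_norm: "norm (mat_scale c (M::complex^'n^'n)) = cmod c * norm M"
proof -
  have "(norm (mat_scale c M))^2 = (cmod c * norm M)^2"
    unfolding norm_sq_mat power_mult_distrib
    by (simp add: mat_scale_def norm_mult power_mult_distrib sum_distrib_left)
  then show ?thesis by (simp add: power2_eq_iff_nonneg)
qed

lemma mat_scale_diff: "mat_scale c M - mat_scale c N = mat_scale c (M - N)"
  by (simp add: vec_eq_iff mat_scale_def right_diff_distrib)

lemma poly_bound:
  fixes A B :: "complex^'n^'n"
  shows "norm (poly_mat p (A ** B) - poly_mat p (B ** A))
    \<le> (\<Sum>k=1..degree p. cmod (coeff p k) * real k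
            * op_norm A ^ (k - 1) * op_norm B ^ (k - 1)) * norm (A ** B - B ** A)"
proof -
  let ?K = "op_norm A * op_norm B"
  have K: "?K \<ge> 0" by (simp add: op_nonneg)
  have bX: "bnd (A ** B) ?K" by (intro bnd_mult op_bnd op_nonneg)
  have bY: "bnd (Finite_Cartesian_Product.transpose (B ** A)) ?K"
    unfolding matrix_transpose_mul by (intro bnd_mult op_bndT op_nonneg)
  let ?g = "\<lambda>k. cmod (coeff p k) * real k * op_norm A ^ (k - 1) * op_norm B ^ (k - 1)"
  have "poly_mat p (A ** B) - poly_mat p (B ** A)
      = (\<Sum>k\<le>degree p. mat_scale (coeff p k) (mat_pow (A ** B) k - mat_pow (B ** A) k))"
    unfolding poly_mat_def by (simp add: sum_subtractf[symmetric] mat_scale_diff)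
  then have "norm (poly_mat p (A ** B) - poly_mat p (B ** A))
      \<le> (\<Sum>k\<le>degree p. norm (mat_scale (coeff p k) (mat_pow (A ** B) k - mat_pow (B ** A) k)))"
    by (simp add: norm_sum)
  also have "\<dots> \<le> (\<Sum>k\<le>degree p. ?g k * norm (A ** B - B ** A))"
  proof (rule sum_mono)
    fix k
    have "norm (mat_pow (A ** B) k - mat_pow (B ** A) k) \<le> real k * ?K^(k-1) * norm (A ** B - B ** A)"
      by (rule pow_diff_bound[OF bX bY K])
    then show "norm (mat_scale (coeff p k) (mat_pow (A ** B) k - mat_pow (B ** A) k)) \<le> ?g k * norm (A ** B - B ** A)"
      unfolding mat_scale_norm by (simp add: mult_left_mono power_mult_distrib mult.assoc)
  qed
  also have "\<dots> = (\<Sum>k=1..degree p. ?g k) * norm (A ** B - B ** A)"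
  proof -
    have "{..degree p} = insert 0 {1..degree p}" by auto
    then show ?thesis by (simp add: sum_distrib_right)
  qed
  finally show ?thesis .
qed

lemma lborel_perm_sign:
  fixes T :: "'a::euclidean_space \<Rightarrow> 'a" and pm :: "'a \<Rightarrow> 'a" and s :: "'a \<Rightarrow> real"
  assumes sig: "bij_betw pm Basis Basis"
    and s: "\<And>b. b \<in> Basis \<Longrightarrow> s b = 1 \<or> s b = -1"
    and T: "\<And>x b. b \<in> Basis \<Longrightarrow> T x \<bullet> pm b = s b * (x \<bullet> b)"
    and meas: "T \<in> borel_measurable borel"
  shows "distr lborel borel T = lborel"
proof (rule lborel_eqI[symmetric])
  show "sets (distr lborel borel T) = sets borel" by simp
  fix l u :: 'a assume le: "\<And>b. b \<in> Basis \<Longrightarrow> l \<bullet> b \<le> u \<bullet> b"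
  define l' where "l' = (\<Sum>b\<in>Basis. (if s b = 1 then l \<bullet> pm b else - (u \<bullet> pm b)) *\<^sub>R b)"
  define u' where "u' = (\<Sum>b\<in>Basis. (if s b = 1 then u \<bullet> pm b else - (l \<bullet> pm b)) *\<^sub>R b)"
  have l'b: "l' \<bullet> b = (if s b = 1 then l \<bullet> pm b else - (u \<bullet> pm b))" if "b \<in> Basis" for b
    unfolding l'_def using that by (simp add: inner_sum_left_Basis)
  have u'b: "u' \<bullet> b = (if s b = 1 then u \<bullet> pm b else - (l \<bullet> pm b))" if "b \<in> Basis" for b
    unfolding u'_def using that by (simp add: inner_sum_left_Basis)
  have img: "pm ` Basis = Basis" using sig by (simp add: bij_betw_def)
  have sB: "pm b \<in> Basis" if "b \<in> Basis" for b using img that by blast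
  have pre: "x \<in> T -` box l u \<longleftrightarrow> x \<in> box l' u'" for x
  proof -
    have "x \<in> T -` box l u \<longleftrightarrow> (\<forall>c\<in>Basis. l \<bullet> c < T x \<bullet> c \<and> T x \<bullet> c < u \<bullet> c)"
      by (simp add: mem_box)
    also have "\<dots> \<longleftrightarrow> (\<forall>c\<in>pm ` Basis. l \<bullet> c < T x \<bullet> c \<and> T x \<bullet> c < u \<bullet> c)"
      by (simp only: img)
    also have "\<dots> \<longleftrightarrow> (\<forall>b\<in>Basis. l \<bullet> pm b < T x \<bullet> pm b \<and> T x \<bullet> pm b < u \<bullet> pm b)"
      by simp
    also have "\<dots> \<longleftrightarrow> (\<forall>b\<in>Basis. l' \<bullet> b < x \<bullet> b \<and> x \<bullet> b < u' \<bullet> b)"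
    proof (intro ball_cong refl)
      fix b :: 'a assume b: "b \<in> Basis"
      show "(l \<bullet> pm b < T x \<bullet> pm b \<and> T x \<bullet> pm b < u \<bullet> pm b) = (l' \<bullet> b < x \<bullet> b \<and> x \<bullet> b < u' \<bullet> b)"
        using s[OF b] T[OF b, of x] l'b[OF b] u'b[OF b] by auto
    qed
    also have "\<dots> \<longleftrightarrow> x \<in> box l' u'" by (simp add: mem_box)
    finally show ?thesis .
  qed
  then have pre': "T -` box l u = box l' u'" by blast
  have le': "l' \<bullet> b \<le> u' \<bullet> b" if "b \<in> Basis" for b
    using le[OF sB[OF that]] l'b[OF that] u'b[OF that] by auto
  have "emeasure (distr lborel borel T) (box l u) = emeasure lborel (T -` box l u)"
    by (simp add: emeasure_distr meas)
  also have "\<dots> = ennreal (\<Prod>b\<in>Basis. (u' - l') \<bullet> b)"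
    unfolding pre' by (rule emeasure_lborel_box) (rule le')
  also have "(\<Prod>b\<in>Basis. (u' - l') \<bullet> b) = (\<Prod>b\<in>Basis. (u - l) \<bullet> pm b)"
  proof (rule prod.cong[OF refl])
    fix b :: 'a assume b: "b \<in> Basis"
    show "(u' - l') \<bullet> b = (u - l) \<bullet> pm b"
      using s[OF b] l'b[OF b] u'b[OF b] by (auto simp: inner_diff_left)
  qed
  also have "\<dots> = (\<Prod>b\<in>Basis. (u - l) \<bullet> b)"
    by (rule prod.reindex_bij_betw[OF sig])
  finally show "emeasure (distr lborel borel T) (box l u) = (\<Prod>b\<in>Basis. (u - l) \<bullet> b)" .
qed

definition negc :: "'n \<Rightarrow> complex^'n \<Rightarrow> complex^'n" where
  "negc k x = (\<chi> i. if i = k then - x$i else x$i)"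
definition tau :: "'n \<Rightarrow> 'n \<Rightarrow> 'n \<Rightarrow> 'n" where
  "tau j l i = (if i = j then l else if i = l then j else i)"
definition swc :: "'n \<Rightarrow> 'n \<Rightarrow> complex^'n \<Rightarrow> complex^'n" where
  "swc j l x = (\<chi> i. x $ tau j l i)"

lemma tau_tau[simp]: "tau j l (tau j l i) = i" by (auto simp: tau_def)

lemma basis_cases:
  assumes "(b::complex^'n) \<in> Basis" obtains i u where "b = axis i u" "u = 1 \<or> u = \<i>"
  using assms by (auto simp: Basis_vec_def Basis_complex_def)

lemma linear_negc: "linear (negc k)"
  by (rule linearI) (auto simp: negc_def vec_eq_iff)

lemma linear_swc: "linear (swc j l)"
  by (rule linearI) (auto simp: swc_def vec_eq_iff)

lemma meas_linear: "linear (f :: complex^'n \<Rightarrow> complex^'n) \<Longrightarrow> f \<in> borel_measurable borel"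
  by (intro borel_measurable_continuous_onI linear_continuous_on) (simp add: linear_conv_bounded_linear)

lemma norm_negc: "norm (negc k x) = norm x"
  unfolding norm_vec_def by (rule arg_cong[where f="\<lambda>f. L2_set f UNIV"]) (auto simp: negc_def)

lemma sum_tau: "(\<Sum>i\<in>UNIV. g (tau j l i)) = (\<Sum>i\<in>UNIV. g i)"
  by (rule sum.reindex_bij_witness[of _ "tau j l" "tau j l"]) auto

lemma norm_swc: "norm (swc j l x) = norm x"
  unfolding norm_vec_def L2_set_def swc_def
  by (simp add: sum_tau[of "\<lambda>i. (norm (x $ i))^2"])

lemma negc_lborel: fixes k :: "'n::finite" shows "distr lborel borel (negc k) = lborel"
proof (rule lborel_perm_sign[where pm=id and s="\<lambda>b. if b $ k = 0 then 1 else -1"])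
  show "bij_betw id Basis Basis" by simp
  show "negc k \<in> borel_measurable borel" by (rule meas_linear[OF linear_negc])
  fix b :: "complex^'n" assume "b \<in> Basis"
  then obtain i u where b: "b = axis i u" "u = 1 \<or> u = \<i>" by (rule basis_cases)
  show "(if b $ k = 0 then 1 else -1) = 1 \<or> (if b $ k = 0 then 1 else -1) = (-1::real)" by auto
  fix x
  have bk: "b $ k = (if k = i then u else 0)" using b(1) by (simp add: axis_def)
  show "negc k x \<bullet> id b = (if b $ k = 0 then 1 else -1) * (x \<bullet> b)"
    using b bk by (auto simp: inner_axis negc_def)
qed

lemma swc_axis: "swc j l (axis i u) = axis (tau j l i) u"
  by (auto simp: swc_def axis_def vec_eq_iff)

lemma swc_lborel: fixes j l :: "'n::finite" shows "distr lborel borel (swc j l) = lborel"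
proof (rule lborel_perm_sign[where pm="swc j l" and s="\<lambda>b. 1"])
  have sw: "swc j l (swc j l x) = x" for x by (simp add: swc_def vec_eq_iff)
  have inB: "swc j l b \<in> Basis" if "b \<in> Basis" for b
  proof -
    from that obtain i u where b: "b = axis i u" "u = 1 \<or> u = \<i>" by (rule basis_cases)
    then show ?thesis by (auto simp: swc_axis Basis_vec_def Basis_complex_def)
  qed
  show "bij_betw (swc j l) Basis Basis"
    by (rule bij_betw_byWitness[where f'="swc j l"]) (auto simp: sw inB)
  show "swc j l \<in> borel_measurable borel" by (rule meas_linear[OF linear_swc])
  fix b :: "complex^'n" assume "b \<in> Basis"
  then obtain i u where b: "b = axis i u" "u = 1 \<or> u = \<i>" by (rule basis_cases)
  show "(1::real) = 1 \<or> (1::real) = -1" by simp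
  fix x
  show "swc j l x \<bullet> swc j l b = 1 * (x \<bullet> b)"
    using b by (simp add: swc_axis inner_axis) (simp add: swc_def)
qed

definition Ub :: "(complex^'n) measure" where
  "Ub = uniform_measure lborel (ball 0 1)"

lemma sphere_Ub: "sphere_measure = distr Ub borel sgn"
  by (simp add: sphere_measure_def Ub_def)

lemma ball_meas: "emeasure lborel (ball (0::complex^'n) 1) \<noteq> 0"
  "emeasure lborel (ball (0::complex^'n) 1) \<noteq> \<infinity>"
proof -
  have pos: "0 < unit_ball_vol (real DIM(complex^'n))" by (rule unit_ball_vol_pos) simp
  have e: "emeasure lborel (ball (0::complex^'n) 1) = ennreal (unit_ball_vol (real DIM(complex^'n)))"
    using emeasure_ball[of 1 "0::complex^'n"] by simp
  show "emeasure lborel (ball (0::complex^'n) 1) \<noteq> 0" unfolding e using pos ennreal_eq_0_iff not_le by metis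
  show "emeasure lborel (ball (0::complex^'n) 1) \<noteq> \<infinity>" unfolding e by simp
qed

lemma sets_Ub[measurable_cong]: "sets (Ub :: (complex^'n) measure) = sets borel"
  by (simp add: Ub_def)

lemma space_Ub: "space (Ub :: (complex^'n) measure) = UNIV"
  using sets_eq_imp_space_eq[OF sets_Ub] by simp

lemma prob_Ub: "prob_space (Ub :: (complex^'n) measure)"
  unfolding Ub_def by (rule prob_space_uniform_measure) (use ball_meas in auto)

lemma meas_Ub: "measurable (Ub :: (complex^'n) measure) N = measurable borel N"
  by (rule measurable_cong_sets) (simp_all add: sets_Ub)

lemma sets_sphere[measurable_cong]: "sets (sphere_measure :: (complex^'n) measure) = sets borel"
  by (simp add: sphere_measure_def)

lemma meas_sphere: "measurable (sphere_measure :: (complex^'n) measure) N = measurable borel N"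
  by (rule measurable_cong_sets) (simp_all add: sets_sphere)

lemma sgn_meas: "(sgn :: complex^'n \<Rightarrow> _) \<in> measurable Ub borel"
  unfolding meas_Ub by simp

lemma prob_sphere: "prob_space (sphere_measure :: (complex^'n) measure)"
  unfolding sphere_Ub by (rule prob_space.prob_space_distr[OF prob_Ub sgn_meas])

lemma Ub_inv:
  fixes T :: "complex^'n \<Rightarrow> complex^'n"
  assumes d: "distr lborel borel T = lborel" and m: "T \<in> borel_measurable borel"
    and n: "\<And>x. norm (T x) = norm x"
  shows "distr Ub borel T = Ub"
proof (rule measure_eqI)
  show "sets (distr Ub borel T) = sets Ub" by (simp add: sets_Ub)
  fix A assume "A \<in> sets (distr Ub borel T)"
  then have A: "A \<in> sets borel" by simp
  have mU: "T \<in> measurable Ub borel" using m by (simp add: meas_Ub)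
  have pA: "T -` A \<in> sets borel" using measurable_sets[OF m A] by simp
  have bA: "ball 0 1 \<inter> A \<in> sets borel" using A by simp
  have eq: "ball 0 1 \<inter> T -` A = T -` (ball 0 1 \<inter> A)" using n by auto
  have "emeasure (distr Ub borel T) A = emeasure Ub (T -` A)"
    by (simp add: emeasure_distr mU A space_Ub)
  also have "\<dots> = emeasure lborel (ball 0 1 \<inter> T -` A) / emeasure lborel (ball (0::complex^'n) 1)"
    unfolding Ub_def by (rule emeasure_uniform_measure) (use pA in simp_all)
  also have "emeasure lborel (ball 0 1 \<inter> T -` A) = emeasure (distr lborel borel T) (ball 0 1 \<inter> A)"
    unfolding eq by (simp add: emeasure_distr m bA)
  also have "\<dots> = emeasure lborel (ball 0 1 \<inter> A)" by (simp add: d)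
  also have "emeasure lborel (ball 0 1 \<inter> A) / emeasure lborel (ball (0::complex^'n) 1) = emeasure Ub A"
    unfolding Ub_def by (rule emeasure_uniform_measure[symmetric]) (use A in simp_all)
  finally show "emeasure (distr Ub borel T) A = emeasure Ub A" .
qed

lemma sphere_inv:
  fixes T :: "complex^'n \<Rightarrow> complex^'n"
  assumes d: "distr lborel borel T = lborel" and lin: "linear T"
    and n: "\<And>x. norm (T x) = norm x"
  shows "distr sphere_measure borel T = sphere_measure"
proof -
  have m: "T \<in> borel_measurable borel" by (rule meas_linear[OF lin])
  have mU: "T \<in> measurable Ub borel" using m by (simp add: meas_Ub)
  have comm: "T \<circ> sgn = sgn \<circ> T"
    by (rule ext) (simp add: sgn_div_norm linear_cmul[OF lin] n)
  have "distr sphere_measure borel T = distr Ub borel (T \<circ> sgn)"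
    unfolding sphere_Ub by (rule distr_distr[OF m sgn_meas])
  also have "\<dots> = distr Ub borel (sgn \<circ> T)" by (simp add: comm)
  also have "\<dots> = distr (distr Ub borel T) borel sgn"
    by (rule distr_distr[symmetric]) (simp_all add: mU)
  also have "\<dots> = sphere_measure" by (simp add: Ub_inv[OF d m n] sphere_Ub)
  finally show ?thesis .
qed

lemma sphere_integral_inv:
  fixes T :: "complex^'n \<Rightarrow> complex^'n" and f :: "complex^'n \<Rightarrow> complex"
  assumes d: "distr lborel borel T = lborel" and lin: "linear T"
    and n: "\<And>x. norm (T x) = norm x" and f: "f \<in> borel_measurable borel"
  shows "(\<integral>v. f (T v) \<partial>sphere_measure) = (\<integral>v. f v \<partial>sphere_measure)"
proof -
  have m: "T \<in> measurable sphere_measure borel"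
    using meas_linear[OF lin] by (simp add: meas_sphere)
  have "(\<integral>v. f (T v) \<partial>sphere_measure) = integral\<^sup>L (distr sphere_measure borel T) f"
    by (rule integral_distr[symmetric, OF m f])
  also have "\<dots> = (\<integral>v. f v \<partial>sphere_measure)" by (simp add: sphere_inv[OF d lin n])
  finally show ?thesis .
qed

lemma sphere_integrable:
  fixes f :: "complex^'n \<Rightarrow> 'b::{banach, second_countable_topology}"
  assumes c: "continuous_on UNIV f"
  shows "integrable sphere_measure f"
proof -
  interpret P: prob_space "sphere_measure :: (complex^'n) measure" by (rule prob_sphere)
  have fm[measurable]: "f \<in> borel_measurable borel" by (rule borel_measurable_continuous_onI[OF c])
  have "compact (f ` cball 0 1)"
    by (rule compact_continuous_image) (use c continuous_on_subset in auto)
  then obtain B where B: "\<And>y. y \<in> f ` cball 0 1 \<Longrightarrow> norm y \<le> B"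
    using compact_imp_bounded bounded_iff by metis
  have "AE v in sphere_measure. norm (f v) \<le> B"
    unfolding sphere_Ub
  proof (subst AE_distr_iff)
    show "sgn \<in> Ub \<rightarrow>\<^sub>M borel" by (rule sgn_meas)
    show "{x \<in> space borel. norm (f x) \<le> B} \<in> sets borel" by measurable
    show "AE x in Ub. norm (f (sgn x)) \<le> B"
    proof (rule AE_I2)
      fix x :: "complex^'n"
      have "sgn x \<in> cball 0 1" by (simp add: norm_sgn)
      then show "norm (f (sgn x)) \<le> B" using B by blast
    qed
  qed
  moreover have "f \<in> borel_measurable sphere_measure" by (simp add: meas_sphere)
  ultimately show ?thesis by (rule P.integrable_const_bound)
qed

lemma AE_sphere_norm1: "AE v in (sphere_measure :: (complex^'n) measure). norm v = 1"
  unfolding sphere_Ub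
proof (subst AE_distr_iff)
  show "sgn \<in> Ub \<rightarrow>\<^sub>M borel" by (rule sgn_meas)
  show "{x \<in> space borel. norm (x::complex^'n) = 1} \<in> sets borel" by measurable
  have "AE x in Ub. (x::complex^'n) \<noteq> 0"
    unfolding Ub_def
    by (rule AE_uniform_measureI) (use AE_lborel_singleton[of 0] in \<open>auto elim: AE_mp\<close>)
  then show "AE x in Ub. norm (sgn (x::complex^'n)) = 1"
    by (rule AE_mp) (simp add: norm_sgn)
qed

definition mm :: "'n::finite \<Rightarrow> 'n \<Rightarrow> complex" where
  "mm j l = (\<integral>v. v$j * cnj (v$l) \<partial>(sphere_measure :: (complex^'n) measure))"

lemma cont_mom: "continuous_on UNIV (\<lambda>v::complex^'n. v$j * cnj (v$l))"
  by (intro continuous_intros)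

lemma mm_off: "j \<noteq> l \<Longrightarrow> mm j l = 0"
proof -
  assume jl: "j \<noteq> l"
  have "(\<integral>v. (negc j v)$j * cnj ((negc j v)$l) \<partial>sphere_measure) = mm j l"
    unfolding mm_def
    by (rule sphere_integral_inv[OF negc_lborel linear_negc norm_negc, where f="\<lambda>v. v$j * cnj (v$l)"])
       (rule borel_measurable_continuous_onI[OF cont_mom])
  moreover have "(\<integral>v. (negc j v)$j * cnj ((negc j v)$l) \<partial>sphere_measure) = - mm j l"
    unfolding mm_def using jl by (simp add: negc_def flip: integral_minus)
  ultimately show "mm j l = 0" by simp
qed

lemma mm_diag_eq: fixes j l :: "'n::finite" shows "mm j j = mm l l"
proof -
  have "(\<integral>v. (swc j l v)$j * cnj ((swc j l v)$j) \<partial>sphere_measure) = mm j j"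
    unfolding mm_def
    by (rule sphere_integral_inv[OF swc_lborel linear_swc norm_swc, where f="\<lambda>v. v$j * cnj (v$j)"])
       (rule borel_measurable_continuous_onI[OF cont_mom])
  moreover have "(\<integral>v. (swc j l v)$j * cnj ((swc j l v)$j) \<partial>sphere_measure) = mm l l"
    unfolding mm_def by (simp add: swc_def tau_def)
  ultimately show ?thesis by simp
qed

lemma sum_cnj_norm: "(\<Sum>j\<in>UNIV. v$j * cnj (v$j)) = complex_of_real ((norm (v::complex^'n))^2)"
  by (simp only: norm_sq_vec of_real_sum complex_norm_square)

lemma mm_sum: "(\<Sum>j\<in>(UNIV::'n::finite set). mm j j) = (1 :: complex)"
proof -
  interpret P: prob_space "sphere_measure :: (complex^'n) measure" by (rule prob_sphere)
  have "(\<Sum>j\<in>(UNIV::'n set). mm j j) = (\<integral>v. (\<Sum>j\<in>UNIV. v$j * cnj (v$j)) \<partial>(sphere_measure :: (complex^'n) measure))"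
  proof -
    have "(\<integral>v. (\<Sum>j\<in>UNIV. v$j * cnj (v$j)) \<partial>(sphere_measure :: (complex^'n) measure)) = (\<Sum>j\<in>(UNIV::'n set). mm j j)"
      unfolding mm_def by (simp add: Bochner_Integration.integral_sum sphere_integrable[OF cont_mom])
    then show ?thesis by simp
  qed
  also have "\<dots> = (\<integral>v. 1 \<partial>(sphere_measure :: (complex^'n) measure))"
  proof (rule integral_cong_AE)
    show "(\<lambda>v::complex^'n. \<Sum>j\<in>UNIV. v$j * cnj (v$j)) \<in> borel_measurable sphere_measure"
      unfolding meas_sphere by (intro borel_measurable_continuous_onI continuous_intros)
    show "(\<lambda>v::complex^'n. 1::complex) \<in> borel_measurable sphere_measure" by simp
    show "AE v in sphere_measure. (\<Sum>j\<in>UNIV. v$j * cnj (v$j)) = (1::complex)"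
      using AE_sphere_norm1 by eventually_elim (simp add: sum_cnj_norm)
  qed
  also have "\<dots> = 1" by (simp add: P.prob_space)
  finally show ?thesis .
qed

lemma mm_diag: fixes j :: "'n::finite" shows "mm j j = 1 / of_nat CARD('n)"
proof -
  have "(\<Sum>i\<in>(UNIV::'n set). mm i i) = of_nat CARD('n) * mm j j"
  proof -
    have "(\<Sum>i\<in>(UNIV::'n set). mm i i) = (\<Sum>i\<in>(UNIV::'n set). mm j j)"
      by (rule sum.cong) (auto intro: mm_diag_eq)
    then show ?thesis by simp
  qed
  with mm_sum[where 'n='n] have "of_nat CARD('n) * mm j j = 1" by simp
  then show ?thesis by (simp add: field_simps)
qed

lemma expand_sq:
  fixes c :: "'n::finite \<Rightarrow> complex" and v :: "complex^'n"
  shows "(\<Sum>j\<in>UNIV. c j * v$j) * cnj (\<Sum>j\<in>UNIV. c j * v$j)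
     = (\<Sum>j\<in>UNIV. \<Sum>l\<in>UNIV. (c j * cnj (c l)) * (v$j * cnj (v$l)))"
  by (simp add: sum_product mult.commute mult.left_commute)

lemma int_row:
  fixes c :: "'n::finite \<Rightarrow> complex"
  shows "(\<integral>v. (cmod (\<Sum>j\<in>UNIV. c j * v$j))^2 \<partial>(sphere_measure :: (complex^'n) measure))
     = (\<Sum>j\<in>UNIV. (cmod (c j))^2) / real CARD('n)"
proof -
  have int1: "integrable sphere_measure (\<lambda>v::complex^'n. (c j * cnj (c l)) * (v$j * cnj (v$l)))" for j l
    by (rule sphere_integrable) (intro continuous_intros)
  have "complex_of_real (\<integral>v. (cmod (\<Sum>j\<in>UNIV. c j * v$j))^2 \<partial>(sphere_measure :: (complex^'n) measure))
     = (\<integral>v. complex_of_real ((cmod (\<Sum>j\<in>UNIV. c j * v$j))^2) \<partial>(sphere_measure :: (complex^'n) measure))"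
    by (rule integral_complex_of_real[symmetric])
  also have "\<dots> = (\<integral>v. (\<Sum>j\<in>UNIV. \<Sum>l\<in>UNIV. (c j * cnj (c l)) * (v$j * cnj (v$l))) \<partial>(sphere_measure :: (complex^'n) measure))"
    by (simp only: complex_norm_square expand_sq)
  also have "\<dots> = (\<Sum>j\<in>UNIV. \<Sum>l\<in>UNIV. (c j * cnj (c l)) * mm j l)"
    unfolding mm_def
    by (simp add: Bochner_Integration.integral_sum integrable_sum int1)
  also have "\<dots> = (\<Sum>j\<in>UNIV. (c j * cnj (c j)) * mm j j)"
  proof (rule sum.cong[OF refl])
    fix j
    have "(\<Sum>l\<in>UNIV. (c j * cnj (c l)) * mm j l) = (\<Sum>l\<in>UNIV. if l = j then (c j * cnj (c j)) * mm j j else 0)"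
      by (rule sum.cong) (auto simp: mm_off)
    then show "(\<Sum>l\<in>UNIV. (c j * cnj (c l)) * mm j l) = (c j * cnj (c j)) * mm j j" by simp
  qed
  also have "\<dots> = complex_of_real ((\<Sum>j\<in>UNIV. (cmod (c j))^2) / real CARD('n))"
    by (simp add: mm_diag complex_norm_square[symmetric] sum_divide_distrib)
  finally show ?thesis using of_real_eq_iff by blast
qed

lemma int_formula:
  fixes C :: "complex^'n^'n"
  shows "real CARD('n) * (\<integral>v. (norm (C *v v))^2 \<partial>sphere_measure) = (norm C)^2"
proof -
  have "(\<integral>v. (norm (C *v v))^2 \<partial>sphere_measure)
      = (\<integral>v. (\<Sum>i\<in>UNIV. (cmod (\<Sum>j\<in>UNIV. C$i$j * v$j))^2) \<partial>(sphere_measure :: (complex^'n) measure))"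
    by (simp add: norm_sq_vec matrix_vector_mult_def)
  also have "\<dots> = (\<Sum>i\<in>UNIV. \<integral>v. (cmod (\<Sum>j\<in>UNIV. C$i$j * v$j))^2 \<partial>(sphere_measure :: (complex^'n) measure))"
    by (rule Bochner_Integration.integral_sum) (rule sphere_integrable, intro continuous_intros)
  also have "\<dots> = (\<Sum>i\<in>UNIV. (\<Sum>j\<in>UNIV. (cmod (C$i$j))^2) / real CARD('n))"
    by (simp only: int_row)
  finally show ?thesis by (simp add: norm_sq_mat sum_divide_distrib[symmetric])
qed

theorem theorem5p3:
  fixes A B :: "complex^'n^'n" and p :: "complex poly"
  assumes "degree p \<ge> 1"
  shows "(frob_norm (poly_mat p (A ** B) - poly_mat p (B ** A)))\<^sup>2
    \<le> real CARD('n)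
       * (\<integral>v. (norm ((A ** B - B ** A) *v v))\<^sup>2 \<partial>sphere_measure)
       * (\<Sum>k=1..degree p. cmod (coeff p k) * real k
            * op_norm A ^ (k - 1) * op_norm B ^ (k - 1))\<^sup>2"
proof -
  let ?S = "\<Sum>k=1..degree p. cmod (coeff p k) * real k * op_norm A ^ (k - 1) * op_norm B ^ (k - 1)"
  let ?D = "A ** B - B ** A"
  have "(frob_norm (poly_mat p (A ** B) - poly_mat p (B ** A)))\<^sup>2 \<le> (?S * norm ?D)^2"
    unfolding frob_eq by (rule power_mono[OF poly_bound norm_ge_zero])
  also have "\<dots> = real CARD('n) * (\<integral>v. (norm (?D *v v))\<^sup>2 \<partial>sphere_measure) * ?S^2"
    by (simp add: int_formula power_mult_distrib)
  finally show ?thesis .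
qed

end
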